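(* There exists an absolute constant $C_1$ such that the following holds. Let $\mu=\sum_{\ell=1}^k\alpha_\ell\mu_\ell$ with each $\mu_\ell$ a $c$-isoperimetric probability measure on $\mathbb R^d$, $\alpha_\ell\ge0$, $\sum_\ell\alpha_\ell=1$. Generate data as follows: $\ell_1,\dots,\ell_n\in[k]$ i.i.d. with $\mathbb P(\ell_i=\ell)=\alpha_\ell$; given $\ell_i$, $x_i\sim\mu_{\ell_i}$; and $y_i\in[-1,1]$ is drawn from a fixed conditional law of $y$ given $x=x_i$ (independently over $i$), so that $(x_i,y_i)_{i\in[n]}$ are i.i.d. with covariate law $\mu$. Let $g(x)=\mathbb E[y\mid x]$, $z_i=y_i-g(x_i)$, $\sigma^2=\mathbb E^\mu[\mathrm{Var}(y\mid x)]>0$. Let $L,\epsilon>0$ and let $\mathcal F$ be a finite class of $L$-Lipschitz functions $\mathbb R^d\to[-1,1]$. If $d\ge C_1\frac{cL^2\sigma^2}{\epsilon^2}$, then \[ \mathbb P\Big(\exists f\in\mathcal F:\ \tfrac1n\sum_{i=1}^n\big(f(x_i)-\mathbb E^{\mu_{\ell_i}}[f]\big)z_i\ge\tfrac{\epsilon}{8}\Big)\le\exp\Big(-\frac{n\sigma^4}{8}\Big)+\exp\Big(\log|\mathcal F|-\frac{\epsilon^2nd}{C_1cL^2\sigma^2}\Big). \]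
   Context: A probability measure $\nu$ on $\mathbb R^d$ satisfies $c$-isoperimetry if for every bounded $L$-Lipschitz (w.r.t. the Euclidean norm) $f:\mathbb R^d\to\mathbb R$ and every $t\ge0$, $\mathbb P_{x\sim\nu}[|f(x)-\mathbb E_\nu f|\ge t]\le 2e^{-dt^2/(2cL^2)}$. $\mathbb E^{\mu_{\ell}}[f]=\int f\,d\mu_\ell$. *)

theory Defs
  imports "HOL-Probability.Probability"
begin

text \<open>R^d is modelled as extensional functions on the index set {..<d},
  carrying the product Borel sigma-algebra.\<close>
definition RdM :: "nat \<Rightarrow> (nat \<Rightarrow> real) measure" where
  "RdM d = PiM {..<d} (\<lambda>_. borel)"

definition eucl_dist :: "nat \<Rightarrow> (nat \<Rightarrow> real) \<Rightarrow> (nat \<Rightarrow> real) \<Rightarrow> real" where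
  "eucl_dist d x y = sqrt (\<Sum>i<d. (x i - y i)^2)"

definition lipschitz_Rd :: "nat \<Rightarrow> real \<Rightarrow> ((nat \<Rightarrow> real) \<Rightarrow> real) \<Rightarrow> bool" where
  "lipschitz_Rd d L f \<longleftrightarrow>
     (\<forall>x\<in>space (RdM d). \<forall>y\<in>space (RdM d). \<bar>f x - f y\<bar> \<le> L * eucl_dist d x y)"

definition isoperimetric :: "nat \<Rightarrow> real \<Rightarrow> (nat \<Rightarrow> real) measure \<Rightarrow> bool" where
  "isoperimetric d c \<nu> \<longleftrightarrow> prob_space \<nu> \<and> sets \<nu> = sets (RdM d) \<and>
     (\<forall>f L t. L > 0 \<longrightarrow> lipschitz_Rd d L f \<longrightarrow> bounded (f ` space (RdM d)) \<longrightarrow> t \<ge> 0 \<longrightarrow>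
        measure \<nu> {x \<in> space \<nu>. \<bar>f x - integral\<^sup>L \<nu> f\<bar> \<ge> t}
          \<le> 2 * exp (- real d * t^2 / (2 * c * L^2)))"

definition label_law :: "nat \<Rightarrow> (nat \<Rightarrow> real) \<Rightarrow> nat measure" where
  "label_law k \<alpha> = density (count_space {..<k}) (\<lambda>l. ennreal (\<alpha> l))"

definition joint_law :: "nat \<Rightarrow> nat \<Rightarrow> (nat \<Rightarrow> real) \<Rightarrow> (nat \<Rightarrow> (nat \<Rightarrow> real) measure)
    \<Rightarrow> ((nat \<Rightarrow> real) \<Rightarrow> real measure) \<Rightarrow> (nat \<times> (nat \<Rightarrow> real) \<times> real) measure" where
  "joint_law d k \<alpha> \<mu> K =
     bind (label_law k \<alpha>) (\<lambda>l. bind (\<mu> l) (\<lambda>x.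
       distr (K x) (count_space {..<k} \<Otimes>\<^sub>M RdM d \<Otimes>\<^sub>M borel) (\<lambda>y. (l, x, y))))"

definition sample_law :: "nat \<Rightarrow> nat \<Rightarrow> (nat \<Rightarrow> real) \<Rightarrow> (nat \<Rightarrow> (nat \<Rightarrow> real) measure)
    \<Rightarrow> ((nat \<Rightarrow> real) \<Rightarrow> real measure) \<Rightarrow> nat \<Rightarrow> (nat \<Rightarrow> nat \<times> (nat \<Rightarrow> real) \<times> real) measure" where
  "sample_law d k \<alpha> \<mu> K n = PiM {..<n} (\<lambda>_. joint_law d k \<alpha> \<mu> K)"

definition cond_mean :: "((nat \<Rightarrow> real) \<Rightarrow> real measure) \<Rightarrow> (nat \<Rightarrow> real) \<Rightarrow> real" where
  "cond_mean K x = (\<integral>y. y \<partial>K x)"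

definition cond_var :: "((nat \<Rightarrow> real) \<Rightarrow> real measure) \<Rightarrow> (nat \<Rightarrow> real) \<Rightarrow> real" where
  "cond_var K x = (\<integral>y. (y - cond_mean K x)^2 \<partial>K x)"

text \<open>sigma^2 = E^mu [Var(y|x)] with mu = sum_l alpha_l mu_l.\<close>
definition noise_var :: "nat \<Rightarrow> (nat \<Rightarrow> real) \<Rightarrow> (nat \<Rightarrow> (nat \<Rightarrow> real) measure)
    \<Rightarrow> ((nat \<Rightarrow> real) \<Rightarrow> real measure) \<Rightarrow> real" where
  "noise_var k \<alpha> \<mu> K = (\<Sum>l<k. \<alpha> l * (\<integral>x. cond_var K x \<partial>\<mu> l))"

end

theory Submission
  imports Defs
begin


lemma space_RdM: "space (RdM d) = PiE {..<d} (\<lambda>_. UNIV)"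
  by (simp add: RdM_def space_PiM)

lemma lipschitz_measurable:
  assumes lip: "lipschitz_Rd d L f"
  shows "f \<in> borel_measurable (RdM d)"
proof -
  define E :: "(nat \<Rightarrow> real) \<Rightarrow> (nat \<Rightarrow> real)" where "E x = restrict x {..<d}" for x
  define g where "g = f \<circ> E"
  have Esp: "E x \<in> space (RdM d)" for x by (simp add: E_def space_RdM)
  have "continuous_on UNIV g"
  proof (rule continuous_on_sequentiallyI)
    fix u :: "nat \<Rightarrow> nat \<Rightarrow> real" and a assume "u \<longlonglongrightarrow> a"
    then have ui: "(\<lambda>n. u n i) \<longlonglongrightarrow> a i" for i
      by (intro isCont_tendsto_compose[of a "\<lambda>x. x i"])
         (auto intro: continuous_on_interior[OF continuous_on_product_coordinates])
    have "(\<lambda>n. L * sqrt (\<Sum>i<d. (u n i - a i)^2)) \<longlonglongrightarrow> L * sqrt (\<Sum>i<d. (a i - a i)^2)"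
      by (intro tendsto_intros ui)
    then have lim0: "(\<lambda>n. L * sqrt (\<Sum>i<d. (u n i - a i)^2)) \<longlonglongrightarrow> 0" by simp
    have bnd: "norm (g (u n) - g a) \<le> L * sqrt (\<Sum>i<d. (u n i - a i)^2)" for n
    proof -
      have "\<bar>f (E (u n)) - f (E a)\<bar> \<le> L * eucl_dist d (E (u n)) (E a)"
        using lip Esp unfolding lipschitz_Rd_def by blast
      also have "eucl_dist d (E (u n)) (E a) = sqrt (\<Sum>i<d. (u n i - a i)^2)"
        unfolding eucl_dist_def E_def by (intro arg_cong[where f=sqrt] sum.cong) auto
      finally show ?thesis by (simp add: g_def)
    qed
    show "(\<lambda>n. g (u n)) \<longlonglongrightarrow> g a"
    proof (rule LIM_zero_cancel)
      show "(\<lambda>n. g (u n) - g a) \<longlonglongrightarrow> 0"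
        by (rule Lim_null_comparison[OF _ lim0]) (use bnd in \<open>auto intro!: always_eventually\<close>)
    qed
  qed
  then have gm: "g \<in> borel_measurable (PiM UNIV (\<lambda>_. borel))"
    unfolding measurable_cong_sets[OF sets_PiM_equal_borel refl]
    by (rule borel_measurable_continuous_onI)
  have idm: "(\<lambda>x. x) \<in> RdM d \<rightarrow>\<^sub>M PiM UNIV (\<lambda>_. borel)"
  proof (rule measurable_PiM_single')
    fix i :: nat
    show "(\<lambda>x. x i) \<in> RdM d \<rightarrow>\<^sub>M borel"
    proof (cases "i < d")
      case True then show ?thesis unfolding RdM_def by (intro measurable_component_singleton) auto
    next
      case False
      have "(\<lambda>x. x i) \<in> RdM d \<rightarrow>\<^sub>M borel \<longleftrightarrow> (\<lambda>x. undefined::real) \<in> RdM d \<rightarrow>\<^sub>M borel"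
        by (rule measurable_cong) (use False in \<open>auto simp: space_RdM PiE_def extensional_def\<close>)
      then show ?thesis by simp
    qed
  qed auto
  have "(\<lambda>x. g x) \<in> borel_measurable (RdM d)"
    using measurable_comp[OF idm gm] by (simp add: comp_def)
  moreover have "x \<in> space (RdM d) \<Longrightarrow> g x = f x" for x
    by (auto simp: g_def E_def space_RdM PiE_def extensional_def restrict_def intro!: arg_cong[where f=f])
  ultimately show ?thesis using measurable_cong by (metis (no_types, lifting))
qed

lemma geom_sum_closed:
  fixes x :: real
  shows "(1 - x) * (\<Sum>j\<in>{1..N}. x ^ j) = x - x ^ (Suc N)"
proof (induction N)
  case (Suc N)
  have "(1 - x) * (\<Sum>j\<in>{1..Suc N}. x ^ j) = (1 - x) * (\<Sum>j\<in>{1..N}. x ^ j) + (1 - x) * x ^ Suc N"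
    by (simp add: algebra_simps)
  also have "\<dots> = x - x ^ Suc N + (1 - x) * x ^ Suc N" by (simp only: Suc.IH)
  also have "\<dots> = x - x ^ Suc (Suc N)" by (simp add: algebra_simps)
  finally show ?case .
qed simp

lemma exp_sum_bound: "(\<Sum>j\<in>{1..N}. exp (- real j)) \<le> 1 / (exp 1 - 1)"
proof -
  define x where "x = exp (-1::real)"
  have x0: "0 < x" and x1: "x < 1" by (auto simp: x_def)
  have eq: "exp (- real j) = x ^ j" for j
    by (simp add: x_def flip: exp_of_nat_mult)
  have "(1 - x) * (\<Sum>j\<in>{1..N}. x ^ j) \<le> x"
    using geom_sum_closed[of x N] x0 by simp
  then have "(\<Sum>j\<in>{1..N}. x ^ j) \<le> x / (1 - x)"
    using x1 by (simp add: field_simps)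
  also have "x / (1 - x) = 1 / (exp 1 - 1)"
    by (simp add: x_def exp_minus field_simps)
  finally show ?thesis by (simp add: eq)
qed

lemma const_six: "exp 1 + 2 * exp 1 * (1 / (exp 1 - 1)) \<le> (6::real)"
proof -
  have e2: "2 \<le> exp (1::real)" using exp_ge_add_one_self[of 1] by simp
  have e3: "exp (1::real) \<le> 3" by (rule exp_le)
  have "(exp 1 - 2) * (exp 1 - 3) \<le> (0::real)"
    using e2 e3 by (intro mult_nonneg_nonpos) auto
  then show ?thesis using e2 by (simp add: field_simps algebra_simps power2_eq_square)
qed

lemma mgf_single:
  assumes iso: "isoperimetric d c \<nu>" and c: "c > 0" and L: "L > 0" and dpos: "d > 0"
    and lip: "lipschitz_Rd d L f" and fb: "\<forall>x\<in>space (RdM d). \<bar>f x\<bar> \<le> 1"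
  shows "integrable \<nu> (\<lambda>x. exp (real d / (c * L^2) / 4 * (f x - integral\<^sup>L \<nu> f)^2))"
    and "(\<integral>x. exp (real d / (c * L^2) / 4 * (f x - integral\<^sup>L \<nu> f)^2) \<partial>\<nu>) \<le> 6"
proof -
  have ps: "prob_space \<nu>" and ss: "sets \<nu> = sets (RdM d)"
    and tail: "\<And>t. t \<ge> 0 \<Longrightarrow> measure \<nu> {x \<in> space \<nu>. \<bar>f x - integral\<^sup>L \<nu> f\<bar> \<ge> t}
          \<le> 2 * exp (- real d * t^2 / (2 * c * L^2))"
  proof -
    have bd: "bounded (f ` space (RdM d))"
      using fb unfolding bounded_iff by (intro exI[of _ 1]) auto
    show "prob_space \<nu>" "sets \<nu> = sets (RdM d)" using iso unfolding isoperimetric_def by auto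
    show "measure \<nu> {x \<in> space \<nu>. \<bar>f x - integral\<^sup>L \<nu> f\<bar> \<ge> t}
          \<le> 2 * exp (- real d * t^2 / (2 * c * L^2))" if "t \<ge> 0" for t
      using iso L lip bd that unfolding isoperimetric_def by blast
  qed
  interpret prob_space \<nu> by (rule ps)
  have sp: "space \<nu> = space (RdM d)" using ss by (rule sets_eq_imp_space_eq)
  have fm[measurable]: "f \<in> borel_measurable \<nu>"
    by (subst measurable_cong_sets[OF ss refl]) (rule lipschitz_measurable[OF lip])
  define D where "D = real d / (c * L^2)"
  define m where "m = integral\<^sup>L \<nu> f"
  define u where "u x = D / 4 * (f x - m)^2" for x
  have Dpos: "D > 0" using dpos c L by (simp add: D_def)
  have intf: "integrable \<nu> f"
    by (rule integrable_const_bound[where B=1]) (auto simp: sp fb)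
  have "m \<le> 1"
  proof -
    have "m \<le> (\<integral>x. 1 \<partial>\<nu>)" unfolding m_def
      by (intro integral_mono intf) (use fb in \<open>auto simp: sp abs_le_iff\<close>)
    then show ?thesis by (simp add: prob_space)
  qed
  moreover have "-1 \<le> m"
  proof -
    have "(\<integral>x. -1 \<partial>\<nu>) \<le> m" unfolding m_def
      by (intro integral_mono intf) (use fb in \<open>auto simp: sp abs_le_iff\<close>)
    then show ?thesis by (simp add: prob_space)
  qed
  ultimately have mb: "\<bar>m\<bar> \<le> 1" by simp
  have um[measurable]: "u \<in> borel_measurable \<nu>" unfolding u_def by measurable
  have u0: "0 \<le> u x" for x using Dpos by (simp add: u_def)
  have uD: "u x \<le> D" if "x \<in> space \<nu>" for x
  proof -
    have "\<bar>f x - m\<bar> \<le> 2" using fb that mb sp by (auto simp: abs_le_iff)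
    then have "(f x - m)^2 \<le> 2^2" by (subst abs_le_square_iff[symmetric]) simp
    then have "D / 4 * (f x - m)^2 \<le> D / 4 * 4" using Dpos by (intro mult_left_mono) auto
    then show ?thesis by (simp add: u_def)
  qed
  show int_exp: "integrable \<nu> (\<lambda>x. exp (real d / (c * L^2) / 4 * (f x - integral\<^sup>L \<nu> f)^2))"
    unfolding D_def[symmetric] m_def[symmetric] u_def[symmetric]
    by (rule integrable_const_bound[where B="exp D"]) (auto simp: uD)
  define N where "N = nat \<lceil>D\<rceil>"
  define A where "A j = {x\<in>space \<nu>. real j \<le> u x}" for j :: nat
  have Asets[measurable]: "A j \<in> sets \<nu>" for j unfolding A_def by measurable
  define S where "S x = (\<Sum>j\<in>{1..N}. exp (real j + 1) * indicator (A j) x)" for x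
  have S0: "0 \<le> S x" for x unfolding S_def by (intro sum_nonneg) auto
  have pw: "exp (u x) \<le> exp 1 + S x" if x: "x \<in> space \<nu>" for x
  proof (cases "u x < 1")
    case True
    then have "exp (u x) \<le> exp 1" by simp
    then show ?thesis using S0[of x] by linarith
  next
    case False
    define j0 where "j0 = nat \<lfloor>u x\<rfloor>"
    have j0r: "real j0 = of_int \<lfloor>u x\<rfloor>" using False by (simp add: j0_def)
    have j0le: "real j0 \<le> u x" using j0r by simp
    have j0gt: "u x < real j0 + 1" using j0r by linarith
    have j01: "1 \<le> j0" using False j0r by linarith
    have j0N: "j0 \<le> N"
    proof -
      have "real j0 \<le> D" using j0le uD[OF x] by linarith
      then have "real j0 \<le> of_int \<lceil>D\<rceil>" by (meson le_of_int_ceiling order_trans)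
      then show ?thesis unfolding N_def by linarith
    qed
    have "exp (u x) \<le> exp (real j0 + 1)" using j0gt by simp
    also have "\<dots> = exp (real j0 + 1) * indicator (A j0) x"
      using x j0le by (simp add: A_def)
    also have "\<dots> \<le> S x" unfolding S_def
      by (rule member_le_sum[where f="\<lambda>j. exp (real j + 1) * indicator (A j) x"])
         (use j01 j0N in auto)
    finally show ?thesis by (smt (verit) exp_gt_zero)
  qed
  have intS: "integrable \<nu> S" unfolding S_def by (rule Bochner_Integration.integrable_sum, rule integrable_mult_right, rule integrable_real_indicator) (auto simp: less_top[symmetric])
  have mA: "measure \<nu> (A j) \<le> 2 * exp (- 2 * real j)" for j
  proof -
    define t where "t = sqrt (4 * real j / D)"
    have t0: "t \<ge> 0" using Dpos by (simp add: t_def)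
    have t2: "t^2 = 4 * real j / D" using Dpos by (simp add: t_def)
    have "A j = {x \<in> space \<nu>. \<bar>f x - m\<bar> \<ge> t}"
    proof -
      have "real j \<le> u x \<longleftrightarrow> t \<le> \<bar>f x - m\<bar>" for x
      proof -
        have "real j \<le> u x \<longleftrightarrow> 4 * real j / D \<le> (f x - m)^2"
          using Dpos by (simp add: u_def field_simps)
        also have "\<dots> \<longleftrightarrow> t^2 \<le> \<bar>f x - m\<bar>^2" by (simp add: t2)
        also have "\<dots> \<longleftrightarrow> t \<le> \<bar>f x - m\<bar>" using t0 by (simp add: abs_le_square_iff[symmetric] abs_of_nonneg)
        finally show ?thesis .
      qed
      then show ?thesis unfolding A_def by auto
    qed
    then have "measure \<nu> (A j) \<le> 2 * exp (- real d * t^2 / (2 * c * L^2))"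
      using tail[OF t0] by (simp add: m_def)
    also have "- real d * t^2 / (2 * c * L^2) = - 2 * real j"
      using Dpos c L by (simp add: t2 D_def field_simps)
    finally show ?thesis .
  qed
  have "(\<integral>x. exp (u x) \<partial>\<nu>) \<le> (\<integral>x. exp 1 + S x \<partial>\<nu>)"
  proof -
    have int_u: "integrable \<nu> (\<lambda>x. exp (u x))" using int_exp by (simp add: u_def D_def m_def)
    show ?thesis using int_u intS by (intro integral_mono) (auto simp: pw)
  qed
  also have "\<dots> = exp 1 + (\<Sum>j\<in>{1..N}. exp (real j + 1) * measure \<nu> (A j))"
  proof -
    have "(\<integral>x. exp 1 + S x \<partial>\<nu>) = exp 1 + (\<integral>x. S x \<partial>\<nu>)"
      using intS by (subst Bochner_Integration.integral_add) (auto simp: prob_space)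
    also have "(\<integral>x. S x \<partial>\<nu>) = (\<Sum>j\<in>{1..N}. (\<integral>x. exp (real j + 1) * indicator (A j) x \<partial>\<nu>))"
      unfolding S_def
      by (rule Bochner_Integration.integral_sum, rule integrable_mult_right, rule integrable_real_indicator) (auto simp: less_top[symmetric])
    also have "\<dots> = (\<Sum>j\<in>{1..N}. exp (real j + 1) * measure \<nu> (A j))"
    proof (rule sum.cong[OF refl])
      fix j
      have "A j \<inter> space \<nu> = A j" by (auto simp: A_def)
      then show "(\<integral>x. exp (real j + 1) * indicator (A j) x \<partial>\<nu>) = exp (real j + 1) * measure \<nu> (A j)"
        by simp
    qed
    finally show ?thesis .
  qed
  also have "\<dots> \<le> exp 1 + (\<Sum>j\<in>{1..N}. exp (real j + 1) * (2 * exp (- 2 * real j)))"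
    by (intro add_left_mono sum_mono mult_left_mono mA) auto
  also have "(\<Sum>j\<in>{1..N}. exp (real j + 1) * (2 * exp (- 2 * real j))) = 2 * exp 1 * (\<Sum>j\<in>{1..N}. exp (- real j))"
    unfolding sum_distrib_left
  proof (rule sum.cong[OF refl])
    fix j :: nat
    have "exp (real j + 1) * exp (- 2 * real j) = exp 1 * exp (- real j)"
      by (simp add: mult_exp_exp)
    then show "exp (real j + 1) * (2 * exp (- 2 * real j)) = 2 * exp 1 * exp (- real j)"
      by (simp add: algebra_simps)
  qed
  also have "\<dots> \<le> 2 * exp 1 * (1 / (exp 1 - 1))"
    by (intro mult_left_mono exp_sum_bound) auto
  also have "exp 1 + \<dots> \<le> 6" by (rule const_six)
  finally show "(\<integral>x. exp (real d / (c * L^2) / 4 * (f x - integral\<^sup>L \<nu> f)^2) \<partial>\<nu>) \<le> 6"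
    by (simp add: u_def D_def m_def)
qed




locale model =
  fixes d k :: nat and \<alpha> :: "nat \<Rightarrow> real" and \<mu> :: "nat \<Rightarrow> (nat \<Rightarrow> real) measure"
    and K :: "(nat \<Rightarrow> real) \<Rightarrow> real measure"
  assumes \<alpha>_nn: "\<And>l. l < k \<Longrightarrow> \<alpha> l \<ge> 0" and \<alpha>_sum: "(\<Sum>l<k. \<alpha> l) = 1"
    and \<mu>_prob: "\<And>l. l < k \<Longrightarrow> prob_space (\<mu> l)"
    and \<mu>_sets: "\<And>l. l < k \<Longrightarrow> sets (\<mu> l) = sets (RdM d)"
    and K_meas: "K \<in> RdM d \<rightarrow>\<^sub>M prob_algebra borel"
    and K_bnd: "\<And>x. x \<in> space (RdM d) \<Longrightarrow> AE y in K x. \<bar>y\<bar> \<le> 1"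
begin

definition "\<Omega> = count_space {..<k} \<Otimes>\<^sub>M RdM d \<Otimes>\<^sub>M (borel :: real measure)"
definition "B l x = distr (K x) \<Omega> (\<lambda>y. (l, x, y))"
definition "A l = bind (\<mu> l) (B l)"
abbreviation "J \<equiv> joint_law d k \<alpha> \<mu> K"

lemma J_eq: "J = bind (label_law k \<alpha>) A"
  unfolding joint_law_def A_def B_def \<Omega>_def ..

lemma K_prob: "x \<in> space (RdM d) \<Longrightarrow> prob_space (K x)"
  using measurable_space[OF K_meas] by (auto simp: space_prob_algebra)

lemma K_sets: "x \<in> space (RdM d) \<Longrightarrow> sets (K x) = sets borel"
  using measurable_space[OF K_meas] by (auto simp: space_prob_algebra)

lemma B_meas: "l < k \<Longrightarrow> B l \<in> RdM d \<rightarrow>\<^sub>M prob_algebra \<Omega>"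
  unfolding B_def \<Omega>_def
  by (rule measurable_distr_prob_space2[OF K_meas]) auto

lemma \<mu>_space: "l < k \<Longrightarrow> \<mu> l \<in> space (prob_algebra (RdM d))"
  using \<mu>_prob \<mu>_sets by (auto simp: space_prob_algebra)

lemma A_space: "l < k \<Longrightarrow> A l \<in> space (prob_algebra \<Omega>)"
  unfolding A_def space_prob_algebra
  using prob_space_bind'[OF \<mu>_space B_meas] sets_bind'[OF \<mu>_space B_meas] by auto

lemma label_space: "label_law k \<alpha> \<in> space (prob_algebra (count_space {..<k}))"
proof -
  have "emeasure (label_law k \<alpha>) {..<k} = (\<Sum>l<k. ennreal (\<alpha> l))"
    unfolding label_law_def
    by (subst emeasure_density) (auto simp: nn_integral_count_space_finite intro!: sum.cong)
  also have "\<dots> = ennreal (\<Sum>l<k. \<alpha> l)" using \<alpha>_nn by (subst sum_ennreal) auto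
  finally have "emeasure (label_law k \<alpha>) (space (label_law k \<alpha>)) = 1"
    by (simp add: \<alpha>_sum label_law_def)
  then have "prob_space (label_law k \<alpha>)" by (rule prob_spaceI)
  then show ?thesis by (auto simp: space_prob_algebra label_law_def)
qed

lemma A_meas: "A \<in> label_law k \<alpha> \<rightarrow>\<^sub>M prob_algebra \<Omega>"
  using A_space by (auto simp: label_law_def)

lemma J_prob: "prob_space J" and J_sets: "sets J = sets \<Omega>"
proof -
  have lm: "A \<in> count_space {..<k} \<rightarrow>\<^sub>M prob_algebra \<Omega>" using A_space by auto
  show "prob_space J" unfolding J_eq by (rule prob_space_bind'[OF label_space lm])
  show "sets J = sets \<Omega>" unfolding J_eq by (rule sets_bind'[OF label_space lm])
qed

lemma J_nn_integral:
  assumes h[measurable]: "h \<in> borel_measurable \<Omega>"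
  shows "(\<integral>\<^sup>+\<omega>. h \<omega> \<partial>J) = (\<Sum>l<k. ennreal (\<alpha> l) * (\<integral>\<^sup>+x. (\<integral>\<^sup>+y. h (l, x, y) \<partial>K x) \<partial>\<mu> l))"
proof -
  have "(\<integral>\<^sup>+\<omega>. h \<omega> \<partial>J) = (\<integral>\<^sup>+l. (\<integral>\<^sup>+\<omega>. h \<omega> \<partial>A l) \<partial>label_law k \<alpha>)"
    unfolding J_eq by (rule nn_integral_bind[OF h measurable_prob_algebraD[OF A_meas]])
  also have "\<dots> = (\<Sum>l<k. ennreal (\<alpha> l) * (\<integral>\<^sup>+\<omega>. h \<omega> \<partial>A l))"
    unfolding label_law_def
    by (subst nn_integral_density) (auto simp: nn_integral_count_space_finite)
  also have "\<dots> = (\<Sum>l<k. ennreal (\<alpha> l) * (\<integral>\<^sup>+x. (\<integral>\<^sup>+y. h (l, x, y) \<partial>K x) \<partial>\<mu> l))"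
  proof (intro sum.cong refl arg_cong2[where f="(*)"])
    fix l assume l: "l \<in> {..<k}"
    have Bm: "B l \<in> \<mu> l \<rightarrow>\<^sub>M subprob_algebra \<Omega>"
      using measurable_prob_algebraD[OF B_meas] l
        measurable_cong_sets[OF \<mu>_sets refl, of l "subprob_algebra \<Omega>"] by auto
    have "(\<integral>\<^sup>+\<omega>. h \<omega> \<partial>A l) = (\<integral>\<^sup>+x. (\<integral>\<^sup>+\<omega>. h \<omega> \<partial>B l x) \<partial>\<mu> l)"
      unfolding A_def by (rule nn_integral_bind[OF h Bm])
    also have "\<dots> = (\<integral>\<^sup>+x. (\<integral>\<^sup>+y. h (l, x, y) \<partial>K x) \<partial>\<mu> l)"
    proof (rule nn_integral_cong)
      fix x assume "x \<in> space (\<mu> l)"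
      then have x: "x \<in> space (RdM d)" using sets_eq_imp_space_eq[OF \<mu>_sets] l by auto
      have "(\<lambda>y. (l, x, y)) \<in> K x \<rightarrow>\<^sub>M \<Omega>"
        using l x unfolding measurable_cong_sets[OF K_sets[OF x] refl] \<Omega>_def by auto
      then show "(\<integral>\<^sup>+\<omega>. h \<omega> \<partial>B l x) = (\<integral>\<^sup>+y. h (l, x, y) \<partial>K x)"
        unfolding B_def by (subst nn_integral_distr) auto
    qed
    finally show "(\<integral>\<^sup>+\<omega>. h \<omega> \<partial>A l) = (\<integral>\<^sup>+x. (\<integral>\<^sup>+y. h (l, x, y) \<partial>K x) \<partial>\<mu> l)" .
  qed
  finally show ?thesis .
qed


lemma K_meas_sub: "K \<in> RdM d \<rightarrow>\<^sub>M subprob_algebra borel"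
  by (rule measurable_prob_algebraD[OF K_meas])

lemma g_meas[measurable]: "cond_mean K \<in> borel_measurable (RdM d)"
proof -
  have "(\<lambda>x. integral\<^sup>L (K x) (\<lambda>y. y)) \<in> borel_measurable (RdM d)"
    using measurable_comp[OF K_meas_sub integral_measurable_subprob_algebra[of "\<lambda>y::real. y" borel]]
    by (simp add: comp_def)
  then show ?thesis unfolding cond_mean_def[abs_def] .
qed

lemma space_\<mu>: "l < k \<Longrightarrow> space (\<mu> l) = space (RdM d)"
  using \<mu>_sets by (rule sets_eq_imp_space_eq)

lemma space_K: "x \<in> space (RdM d) \<Longrightarrow> space (K x) = UNIV"
  using sets_eq_imp_space_eq[OF K_sets] by simp

lemma g_bnd: assumes x: "x \<in> space (RdM d)" shows "\<bar>cond_mean K x\<bar> \<le> 1"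
proof -
  interpret prob_space "K x" by (rule K_prob[OF x])
  have ae: "AE y in K x. \<bar>y\<bar> \<le> 1" by (rule K_bnd[OF x])
  have idm: "(\<lambda>y. y) \<in> borel_measurable (K x)"
    by (subst measurable_cong_sets[OF K_sets[OF x] refl]) simp
  have int: "integrable (K x) (\<lambda>y. y)"
    by (rule integrable_const_bound[where B=1]) (use ae idm in auto)
  have "(\<integral>y. y \<partial>K x) \<le> (\<integral>y. 1 \<partial>K x)"
    by (rule integral_mono_AE[OF int]) (use ae in auto)
  moreover have "(\<integral>y. -1 \<partial>K x) \<le> (\<integral>y. y \<partial>K x)"
    by (rule integral_mono_AE[OF _ int]) (use ae in auto)
  ultimately show ?thesis by (simp add: cond_mean_def prob_space abs_le_iff)
qed

lemma cv_props: assumes x: "x \<in> space (RdM d)"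
  shows "(\<integral>\<^sup>+y. ennreal ((y - cond_mean K x)^2) \<partial>K x) = ennreal (cond_var K x)"
    and "0 \<le> cond_var K x" and "cond_var K x \<le> 4"
proof -
  interpret prob_space "K x" by (rule K_prob[OF x])
  have ae: "AE y in K x. \<bar>y\<bar> \<le> 1" by (rule K_bnd[OF x])
  have gb: "\<bar>cond_mean K x\<bar> \<le> 1" by (rule g_bnd[OF x])
  have ae4: "AE y in K x. (y - cond_mean K x)^2 \<le> 4"
  proof (rule eventually_mono[OF ae])
    fix y :: real assume "\<bar>y\<bar> \<le> 1"
    then have "\<bar>y - cond_mean K x\<bar> \<le> \<bar>2\<bar>" using gb by (simp add: abs_le_iff)
    then have "(y - cond_mean K x)^2 \<le> 2^2" by (simp only: abs_le_square_iff)
    then show "(y - cond_mean K x)^2 \<le> 4" by simp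
  qed
  have hm: "(\<lambda>y. (y - cond_mean K x)^2) \<in> borel_measurable (K x)"
    by (subst measurable_cong_sets[OF K_sets[OF x] refl]) simp
  have int: "integrable (K x) (\<lambda>y. (y - cond_mean K x)^2)"
    by (rule integrable_const_bound[where B=4]) (use ae4 hm in auto)
  show "(\<integral>\<^sup>+y. ennreal ((y - cond_mean K x)^2) \<partial>K x) = ennreal (cond_var K x)"
    unfolding cond_var_def by (rule nn_integral_eq_integral[OF int]) auto
  show "0 \<le> cond_var K x" unfolding cond_var_def by (rule integral_nonneg_AE) auto
  have "cond_var K x \<le> (\<integral>y. 4 \<partial>K x)" unfolding cond_var_def
    by (rule integral_mono_AE[OF int]) (use ae4 in auto)
  then show "cond_var K x \<le> 4" by (simp add: prob_space)
qed

lemma cv_meas[measurable]: "cond_var K \<in> borel_measurable (RdM d)"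
proof -
  have "(\<lambda>x. \<integral>\<^sup>+y. ennreal ((y - cond_mean K x)^2) \<partial>K x) \<in> borel_measurable (RdM d)"
    by (rule nn_integral_measurable_subprob_algebra2[OF _ K_meas_sub]) measurable
  then have "(\<lambda>x. enn2real (\<integral>\<^sup>+y. ennreal ((y - cond_mean K x)^2) \<partial>K x)) \<in> borel_measurable (RdM d)"
    by measurable
  then show ?thesis
    by (rule measurable_cong[THEN iffD1, rotated]) (simp add: cv_props)
qed

lemma space_\<Omega>: "space \<Omega> = {..<k} \<times> space (RdM d) \<times> UNIV"
  by (simp add: \<Omega>_def space_pair_measure)

lemma space_J: "space J = space \<Omega>"
  using J_sets by (rule sets_eq_imp_space_eq)

definition "zsq \<omega> = (snd (snd \<omega>) - cond_mean K (fst (snd \<omega>)))^2"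

lemma zsq_meas[measurable]: "zsq \<in> borel_measurable \<Omega>"
proof -
  have "(\<lambda>\<omega>. (snd (snd \<omega>) - cond_mean K (fst (snd \<omega>)))^2)
     \<in> borel_measurable (count_space {..<k} \<Otimes>\<^sub>M RdM d \<Otimes>\<^sub>M (borel :: real measure))"
    by measurable
  then show ?thesis unfolding zsq_def[abs_def] \<Omega>_def .
qed

lemma J_zsq_nn: "(\<integral>\<^sup>+\<omega>. ennreal (zsq \<omega>) \<partial>J) = ennreal (noise_var k \<alpha> \<mu> K)"
proof -
  have "(\<integral>\<^sup>+\<omega>. ennreal (zsq \<omega>) \<partial>J)
      = (\<Sum>l<k. ennreal (\<alpha> l) * (\<integral>\<^sup>+x. (\<integral>\<^sup>+y. ennreal ((y - cond_mean K x)^2) \<partial>K x) \<partial>\<mu> l))"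
  proof -
    have m: "(\<lambda>\<omega>. ennreal (zsq \<omega>)) \<in> borel_measurable \<Omega>" by measurable
    show ?thesis using J_nn_integral[OF m] by (simp add: zsq_def)
  qed
  also have "\<dots> = (\<Sum>l<k. ennreal (\<alpha> l * (\<integral>x. cond_var K x \<partial>\<mu> l)))"
  proof (rule sum.cong[OF refl])
    fix l assume l: "l \<in> {..<k}"
    interpret prob_space "\<mu> l" using \<mu>_prob l by auto
    have "(\<integral>\<^sup>+x. (\<integral>\<^sup>+y. ennreal ((y - cond_mean K x)^2) \<partial>K x) \<partial>\<mu> l) = (\<integral>\<^sup>+x. ennreal (cond_var K x) \<partial>\<mu> l)"
      by (rule nn_integral_cong) (use l in \<open>simp add: space_\<mu> cv_props\<close>)
    also have "\<dots> = ennreal (\<integral>x. cond_var K x \<partial>\<mu> l)"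
    proof (rule nn_integral_eq_integral)
      have cm: "cond_var K \<in> borel_measurable (\<mu> l)"
        using l by (subst measurable_cong_sets[OF \<mu>_sets refl]) auto
      show "integrable (\<mu> l) (cond_var K)"
        by (rule integrable_const_bound[where B=4]) (use l cm in \<open>auto simp: space_\<mu> cv_props\<close>)
      show "AE x in \<mu> l. 0 \<le> cond_var K x" using l by (auto simp: space_\<mu> cv_props)
    qed
    also have "ennreal (\<alpha> l) * \<dots> = ennreal (\<alpha> l * (\<integral>x. cond_var K x \<partial>\<mu> l))"
      using \<alpha>_nn l by (simp add: ennreal_mult')
    finally show "ennreal (\<alpha> l) * (\<integral>\<^sup>+x. (\<integral>\<^sup>+y. ennreal ((y - cond_mean K x)^2) \<partial>K x) \<partial>\<mu> l)
      = ennreal (\<alpha> l * (\<integral>x. cond_var K x \<partial>\<mu> l))" by simp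
  qed
  also have "\<dots> = ennreal (noise_var k \<alpha> \<mu> K)"
    unfolding noise_var_def
  proof (rule sum_ennreal)
    fix l assume l: "l \<in> {..<k}"
    interpret prob_space "\<mu> l" using \<mu>_prob l by auto
    have "0 \<le> (\<integral>x. cond_var K x \<partial>\<mu> l)"
      by (rule integral_nonneg_AE) (use l in \<open>auto simp: space_\<mu> cv_props\<close>)
    then show "0 \<le> \<alpha> l * (\<integral>x. cond_var K x \<partial>\<mu> l)" using \<alpha>_nn l by auto
  qed
  finally show ?thesis .
qed


lemma J_AE_y: "AE \<omega> in J. \<bar>snd (snd \<omega>)\<bar> \<le> 1"
proof -
  have hm: "(\<lambda>\<omega>. indicator {\<omega>\<in>space \<Omega>. 1 < \<bar>snd (snd \<omega>)\<bar>} \<omega> :: ennreal) \<in> borel_measurable \<Omega>"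
    by (intro borel_measurable_indicator) (simp add: \<Omega>_def)
  have "(\<integral>\<^sup>+\<omega>. indicator {\<omega>\<in>space \<Omega>. 1 < \<bar>snd (snd \<omega>)\<bar>} \<omega> \<partial>J) = 0"
  proof (subst J_nn_integral[OF hm], rule sum.neutral, intro ballI)
    fix l assume l: "l \<in> {..<k}"
    have "(\<integral>\<^sup>+x. (\<integral>\<^sup>+y. indicator {\<omega>\<in>space \<Omega>. 1 < \<bar>snd (snd \<omega>)\<bar>} (l, x, y) \<partial>K x) \<partial>\<mu> l) = (\<integral>\<^sup>+x. 0 \<partial>\<mu> l)"
    proof (rule nn_integral_cong)
      fix x assume "x \<in> space (\<mu> l)"
      then have x: "x \<in> space (RdM d)" using l space_\<mu> by auto
      show "(\<integral>\<^sup>+y. indicator {\<omega>\<in>space \<Omega>. 1 < \<bar>snd (snd \<omega>)\<bar>} (l, x, y) \<partial>K x) = 0"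
      proof -
        have "(\<integral>\<^sup>+y. indicator {\<omega>\<in>space \<Omega>. 1 < \<bar>snd (snd \<omega>)\<bar>} (l, x, y) \<partial>K x) = (\<integral>\<^sup>+y. 0 \<partial>K x)"
          by (rule nn_integral_cong_AE) (use K_bnd[OF x] in \<open>eventually_elim, auto simp: indicator_def\<close>)
        then show ?thesis by simp
      qed
    qed
    then show "ennreal (\<alpha> l) * (\<integral>\<^sup>+x. (\<integral>\<^sup>+y. indicator {\<omega>\<in>space \<Omega>. 1 < \<bar>snd (snd \<omega>)\<bar>} (l, x, y) \<partial>K x) \<partial>\<mu> l) = 0"
      by simp
  qed
  moreover have "{\<omega>\<in>space \<Omega>. 1 < \<bar>snd (snd \<omega>)\<bar>} \<in> sets J" unfolding J_sets by (simp add: \<Omega>_def)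
  ultimately have "emeasure J {\<omega>\<in>space \<Omega>. 1 < \<bar>snd (snd \<omega>)\<bar>} = 0" by simp
  then show ?thesis
    by (intro AE_I[where N="{\<omega>\<in>space \<Omega>. 1 < \<bar>snd (snd \<omega>)\<bar>}"])
       (auto simp: space_J J_sets \<Omega>_def)
qed

lemma J_zsq_AE: "AE \<omega> in J. 0 \<le> zsq \<omega> \<and> zsq \<omega> \<le> 4"
  using J_AE_y AE_space
proof eventually_elim
  case (elim \<omega>)
  then have "\<omega> \<in> space \<Omega>" by (simp add: space_J)
  then have x: "fst (snd \<omega>) \<in> space (RdM d)" by (auto simp: space_\<Omega>)
  have "\<bar>snd (snd \<omega>) - cond_mean K (fst (snd \<omega>))\<bar> \<le> \<bar>2\<bar>"
    using g_bnd[OF x] elim by (simp add: abs_le_iff)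
  then have "(snd (snd \<omega>) - cond_mean K (fst (snd \<omega>)))^2 \<le> 2^2" by (simp only: abs_le_square_iff)
  then show ?case by (simp add: zsq_def)
qed

lemma noise_var_nonneg: "0 \<le> noise_var k \<alpha> \<mu> K"
  unfolding noise_var_def
proof (rule sum_nonneg)
  fix l assume l: "l \<in> {..<k}"
  interpret prob_space "\<mu> l" using \<mu>_prob l by auto
  have "0 \<le> (\<integral>x. cond_var K x \<partial>\<mu> l)"
    by (rule integral_nonneg_AE) (use l in \<open>auto simp: space_\<mu> cv_props\<close>)
  then show "0 \<le> \<alpha> l * (\<integral>x. cond_var K x \<partial>\<mu> l)" using \<alpha>_nn l by auto
qed

lemma J_zsq_exp: "integral\<^sup>L J zsq = noise_var k \<alpha> \<mu> K"
proof -
  have m: "zsq \<in> borel_measurable J" by (subst measurable_cong_sets[OF J_sets refl]) simp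
  have "integral\<^sup>L J zsq = enn2real (\<integral>\<^sup>+\<omega>. ennreal (zsq \<omega>) \<partial>J)"
    by (rule integral_eq_nn_integral[OF m]) (use J_zsq_AE in \<open>auto elim: eventually_mono\<close>)
  then show ?thesis using noise_var_nonneg by (simp add: J_zsq_nn)
qed

lemma J_mgf:
  assumes iso: "\<And>l. l < k \<Longrightarrow> isoperimetric d c (\<mu> l)" and c: "c > 0" and L: "L > 0" and dpos: "d > 0"
    and lip: "lipschitz_Rd d L f" and fb: "\<forall>x\<in>space (RdM d). \<bar>f x\<bar> \<le> 1"
  shows "(\<integral>\<^sup>+\<omega>. ennreal (exp (real d / (c * L^2) / 4 * (f (fst (snd \<omega>)) - integral\<^sup>L (\<mu> (fst \<omega>)) f)^2)) \<partial>J) \<le> 6"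
proof -
  define D where "D = real d / (c * L^2)"
  have fm[measurable]: "f \<in> borel_measurable (RdM d)" by (rule lipschitz_measurable[OF lip])
  have mm[measurable]: "(\<lambda>l. integral\<^sup>L (\<mu> l) f) \<in> borel_measurable (count_space {..<k})" by simp
  have hm: "(\<lambda>\<omega>. ennreal (exp (D / 4 * (f (fst (snd \<omega>)) - integral\<^sup>L (\<mu> (fst \<omega>)) f)^2))) \<in> borel_measurable \<Omega>"
    unfolding \<Omega>_def by measurable
  have "(\<integral>\<^sup>+\<omega>. ennreal (exp (D / 4 * (f (fst (snd \<omega>)) - integral\<^sup>L (\<mu> (fst \<omega>)) f)^2)) \<partial>J)
     = (\<Sum>l<k. ennreal (\<alpha> l) * (\<integral>\<^sup>+x. (\<integral>\<^sup>+y. ennreal (exp (D / 4 * (f x - integral\<^sup>L (\<mu> l) f)^2)) \<partial>K x) \<partial>\<mu> l))"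
    using J_nn_integral[OF hm] by simp
  also have "\<dots> \<le> (\<Sum>l<k. ennreal (\<alpha> l) * 6)"
  proof (intro sum_mono mult_left_mono)
    fix l assume l: "l \<in> {..<k}"
    interpret prob_space "\<mu> l" using \<mu>_prob l by auto
    have "(\<integral>\<^sup>+x. (\<integral>\<^sup>+y. ennreal (exp (D / 4 * (f x - integral\<^sup>L (\<mu> l) f)^2)) \<partial>K x) \<partial>\<mu> l)
        = (\<integral>\<^sup>+x. ennreal (exp (D / 4 * (f x - integral\<^sup>L (\<mu> l) f)^2)) \<partial>\<mu> l)"
    proof (rule nn_integral_cong)
      fix x assume "x \<in> space (\<mu> l)"
      then have x: "x \<in> space (RdM d)" using l space_\<mu> by auto
      interpret K: prob_space "K x" by (rule K_prob[OF x])
      show "(\<integral>\<^sup>+y. ennreal (exp (D / 4 * (f x - integral\<^sup>L (\<mu> l) f)^2)) \<partial>K x)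
          = ennreal (exp (D / 4 * (f x - integral\<^sup>L (\<mu> l) f)^2))"
        by (simp add: K.emeasure_space_1)
    qed
    also have "\<dots> = ennreal (\<integral>x. exp (D / 4 * (f x - integral\<^sup>L (\<mu> l) f)^2) \<partial>\<mu> l)"
      by (rule nn_integral_eq_integral)
         (use mgf_single(1)[OF iso[of l] c L dpos lip fb] l in \<open>auto simp: D_def\<close>)
    also have "\<dots> \<le> ennreal 6"
      using mgf_single(2)[OF iso[of l] c L dpos lip fb] l by (intro ennreal_leI) (auto simp: D_def)
    finally show "(\<integral>\<^sup>+x. (\<integral>\<^sup>+y. ennreal (exp (D / 4 * (f x - integral\<^sup>L (\<mu> l) f)^2)) \<partial>K x) \<partial>\<mu> l) \<le> 6"
      by simp
  qed auto
  also have "\<dots> = ennreal (\<Sum>l<k. \<alpha> l) * 6"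
    using \<alpha>_nn by (subst sum_ennreal[symmetric]) (auto simp: sum_distrib_right)
  also have "\<dots> = 6" by (simp add: \<alpha>_sum)
  finally show ?thesis by (simp add: D_def)
qed


abbreviation "P n \<equiv> sample_law d k \<alpha> \<mu> K n"

lemma P_eq: "P n = PiM {..<n} (\<lambda>_. J)" by (simp add: sample_law_def)

lemma P_prob: "prob_space (P n)"
  unfolding P_eq by (rule prob_space_PiM) (rule J_prob)

lemma P_comp: "i < n \<Longrightarrow> distr (P n) J (\<lambda>\<omega>. \<omega> i) = J"
  unfolding P_eq by (rule distr_PiM_component) (auto intro: J_prob)

lemma P_comp_meas: "i < n \<Longrightarrow> (\<lambda>\<omega>. \<omega> i) \<in> P n \<rightarrow>\<^sub>M J"
  unfolding P_eq by (rule measurable_component_singleton) auto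

lemma P_indep:
  assumes h[measurable]: "h \<in> borel_measurable J" and n: "n > 0"
  shows "prob_space.indep_vars (P n) (\<lambda>_. borel) (\<lambda>i \<omega>. h (\<omega> i)) {..<n}"
proof -
  interpret prob_space "P n" by (rule P_prob)
  interpret J: prob_space J by (rule J_prob)
  have rv: "(\<lambda>\<omega>. h (\<omega> i)) \<in> P n \<rightarrow>\<^sub>M borel" if "i \<in> {..<n}" for i
    using measurable_comp[OF P_comp_meas h] that by (simp add: comp_def)
  define N where "N = distr J borel h"
  have Nprob: "prob_space N" unfolding N_def by (rule J.prob_space_distr) simp
  have hN: "h \<in> J \<rightarrow>\<^sub>M N" unfolding N_def by simp
  have "distr (P n) (\<Pi>\<^sub>M i\<in>{..<n}. borel) (\<lambda>x. \<lambda>i\<in>{..<n}. h (x i))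
      = distr (PiM {..<n} (\<lambda>_. J)) (\<Pi>\<^sub>M i\<in>{..<n}. N) (compose {..<n} h)"
    by (intro distr_cong) (auto simp: P_eq compose_def N_def intro!: sets_PiM_cong)
  also have "\<dots> = PiM {..<n} (\<lambda>i. distr J N h)"
    by (rule distr_PiM_finite_prob_space') (auto intro: J_prob Nprob hN)
  also have "\<dots> = PiM {..<n} (\<lambda>i. distr (P n) borel (\<lambda>\<omega>. h (\<omega> i)))"
  proof (rule PiM_cong[OF refl])
    fix i assume i: "i \<in> {..<n}"
    have "distr (P n) borel (\<lambda>\<omega>. h (\<omega> i)) = distr (distr (P n) J (\<lambda>\<omega>. \<omega> i)) borel h"
      using i by (subst distr_distr[OF h P_comp_meas]) (auto simp: comp_def)
    also have "\<dots> = distr J borel h" using i by (simp add: P_comp)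
    also have "\<dots> = distr J N h" by (intro distr_cong) (auto simp: N_def)
    finally show "distr J N h = distr (P n) borel (\<lambda>\<omega>. h (\<omega> i))" by simp
  qed
  finally show ?thesis
    using n by (subst indep_vars_iff_distr_eq_PiM') (auto intro: rv)
qed

lemma P_chernoff:
  assumes h[measurable]: "h \<in> borel_measurable J" and s: "s \<ge> 0" and M: "M \<ge> 0"
    and mgf: "(\<integral>\<^sup>+\<omega>. ennreal (exp (s * h \<omega>)) \<partial>J) \<le> ennreal M"
  shows "measure (P n) {\<omega>\<in>space (P n). t \<le> (\<Sum>i<n. h (\<omega> i))} \<le> exp (- s * t) * M ^ n"
proof -
  interpret PJ: product_prob_space "\<lambda>_. J" by (rule product_prob_spaceI) (rule J_prob)
  define G where "G = {\<omega>\<in>space (P n). t \<le> (\<Sum>i<n. h (\<omega> i))}"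
  have hc[measurable]: "(\<lambda>\<omega>. h (\<omega> i)) \<in> borel_measurable (P n)" if "i < n" for i
    using measurable_comp[OF P_comp_meas h] that by (simp add: comp_def)
  have Gs: "G \<in> sets (P n)" unfolding G_def by measurable
  have "emeasure (P n) G = (\<integral>\<^sup>+\<omega>. indicator G \<omega> \<partial>P n)" using Gs by simp
  also have "\<dots> \<le> (\<integral>\<^sup>+\<omega>. ennreal (exp (- s * t)) * (\<Prod>i\<in>{..<n}. ennreal (exp (s * h (\<omega> i)))) \<partial>P n)"
  proof (rule nn_integral_mono)
    fix \<omega> assume \<omega>: "\<omega> \<in> space (P n)"
    have "(\<Prod>i\<in>{..<n}. ennreal (exp (s * h (\<omega> i)))) = ennreal (\<Prod>i\<in>{..<n}. exp (s * h (\<omega> i)))"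
      by (simp add: prod_ennreal)
    also have "(\<Prod>i\<in>{..<n}. exp (s * h (\<omega> i))) = exp (s * (\<Sum>i<n. h (\<omega> i)))"
      by (simp add: exp_sum sum_distrib_left)
    finally have eq: "ennreal (exp (- s * t)) * (\<Prod>i\<in>{..<n}. ennreal (exp (s * h (\<omega> i))))
        = ennreal (exp (s * ((\<Sum>i<n. h (\<omega> i)) - t)))"
      by (simp add: ennreal_mult[symmetric] mult_exp_exp algebra_simps)
    show "indicator G \<omega> \<le> ennreal (exp (- s * t)) * (\<Prod>i\<in>{..<n}. ennreal (exp (s * h (\<omega> i))))"
    proof (cases "\<omega> \<in> G")
      case True
      then have "0 \<le> s * ((\<Sum>i<n. h (\<omega> i)) - t)" using s by (simp add: G_def)
      then have "1 \<le> exp (s * ((\<Sum>i<n. h (\<omega> i)) - t))" by simp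
      then show ?thesis using True unfolding eq by (simp add: ennreal_leI[of 1, simplified])
    qed simp
  qed
  also have "\<dots> = ennreal (exp (- s * t)) * (\<integral>\<^sup>+\<omega>. (\<Prod>i\<in>{..<n}. ennreal (exp (s * h (\<omega> i)))) \<partial>P n)"
    by (rule nn_integral_cmult) measurable
  also have "(\<integral>\<^sup>+\<omega>. (\<Prod>i\<in>{..<n}. ennreal (exp (s * h (\<omega> i)))) \<partial>P n)
      = (\<Prod>i\<in>{..<n}. (\<integral>\<^sup>+\<omega>. ennreal (exp (s * h \<omega>)) \<partial>J))"
    unfolding P_eq by (rule PJ.product_nn_integral_prod) auto
  also have "\<dots> \<le> (\<Prod>i\<in>{..<n}. ennreal M)"
    using mgf by (simp add: power_mono)
  also have "ennreal (exp (- s * t)) * \<dots> = ennreal (exp (- s * t) * M ^ n)"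
    using M by (simp add: prod_ennreal ennreal_mult ennreal_power)
  finally have "emeasure (P n) G \<le> ennreal (exp (- s * t) * M ^ n)"
    by (simp add: mult_left_mono)
  then show ?thesis unfolding G_def[symmetric] measure_def
    by (rule enn2real_leI[rotated]) (use M in simp)
qed


lemma zsq_measJ[measurable]: "zsq \<in> borel_measurable J"
  by (subst measurable_cong_sets[OF J_sets refl]) simp

lemma hoeffding_part:
  assumes n: "n > 0"
  shows "measure (P n) {\<omega>\<in>space (P n). real n * noise_var k \<alpha> \<mu> K + real n * noise_var k \<alpha> \<mu> K
            \<le> (\<Sum>i<n. zsq (\<omega> i))} \<le> exp (- real n * (noise_var k \<alpha> \<mu> K)^2 / 8)"
proof -
  define nv where "nv = noise_var k \<alpha> \<mu> K"
  interpret prob_space "P n" by (rule P_prob)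
  have ex: "expectation (\<lambda>\<omega>. zsq (\<omega> i)) = nv" if "i < n" for i
  proof -
    have "expectation (\<lambda>\<omega>. zsq (\<omega> i)) = integral\<^sup>L (distr (P n) J (\<lambda>\<omega>. \<omega> i)) zsq"
      by (rule integral_distr[symmetric, OF P_comp_meas[OF that] zsq_measJ])
    also have "\<dots> = nv" using that by (simp add: P_comp J_zsq_exp nv_def)
    finally show ?thesis .
  qed
  have ae: "AE \<omega> in P n. zsq (\<omega> i) \<in> {0..4}" if "i < n" for i
  proof -
    have "AE x in distr (P n) J (\<lambda>\<omega>. \<omega> i). zsq x \<in> {0..4}"
      unfolding P_comp[OF that] using J_zsq_AE by simp
    then show ?thesis
      by (subst (asm) AE_distr_iff[OF P_comp_meas[OF that]]) auto
  qed
  interpret H: Hoeffding_ineq "P n" "{..<n}" "\<lambda>i \<omega>. zsq (\<omega> i)" "\<lambda>_. 0" "\<lambda>_. 4" "real n * nv"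
  proof unfold_locales
    show "finite {..<n}" by simp
    show "indep_vars (\<lambda>_. borel) (\<lambda>i \<omega>. zsq (\<omega> i)) {..<n}"
      by (rule P_indep[OF zsq_measJ n])
    show "\<And>i. i \<in> {..<n} \<Longrightarrow> AE x in P n. zsq (x i) \<in> {0..4}" using ae by auto
    show "real n * nv \<equiv> \<Sum>i<n. expectation (\<lambda>\<omega>. zsq (\<omega> i))" using ex by simp
  qed
  have "prob {\<omega>\<in>space (P n). (\<Sum>i<n. zsq (\<omega> i)) \<ge> real n * nv + real n * nv}
      \<le> exp (-2 * (real n * nv)^2 / (\<Sum>i<n. (4 - 0)^2))"
    by (rule H.Hoeffding_ineq_ge) (use n noise_var_nonneg in \<open>auto simp: nv_def\<close>)
  also have "-2 * (real n * nv)^2 / (\<Sum>i<n. (4 - 0)^2) = - real n * nv^2 / 8"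
    using n by (simp add: power2_eq_square field_simps)
  finally show ?thesis by (simp add: nv_def)
qed


lemma G_bound:
  assumes iso: "\<And>l. l < k \<Longrightarrow> isoperimetric d c (\<mu> l)" and c: "c > 0" and L: "L > 0" and dpos: "d > 0"
    and lip: "lipschitz_Rd d L f" and fb: "\<forall>x\<in>space (RdM d). \<bar>f x\<bar> \<le> 1"
  shows "measure (P n) {\<omega>\<in>space (P n). t \<le> (\<Sum>i<n. (f (fst (snd (\<omega> i))) - integral\<^sup>L (\<mu> (fst (\<omega> i))) f)^2)}
     \<le> exp (- (real d / (c * L^2) / 4) * t) * 6 ^ n"
proof -
  have fm[measurable]: "f \<in> borel_measurable (RdM d)" by (rule lipschitz_measurable[OF lip])
  have mm[measurable]: "(\<lambda>l. integral\<^sup>L (\<mu> l) f) \<in> borel_measurable (count_space {..<k})" by simp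
  have hm: "(\<lambda>\<omega>. (f (fst (snd \<omega>)) - integral\<^sup>L (\<mu> (fst \<omega>)) f)^2) \<in> borel_measurable \<Omega>"
    unfolding \<Omega>_def by measurable
  then have hJ: "(\<lambda>\<omega>. (f (fst (snd \<omega>)) - integral\<^sup>L (\<mu> (fst \<omega>)) f)^2) \<in> borel_measurable J"
    by (subst measurable_cong_sets[OF J_sets refl])
  have s0: "0 \<le> real d / (c * L^2) / 4" using c L by simp
  show ?thesis
    by (rule P_chernoff[OF hJ s0]) (use J_mgf[OF iso c L dpos lip fb] in auto)
qed


lemma main_bound:
  assumes iso: "\<And>l. l < k \<Longrightarrow> isoperimetric d c (\<mu> l)" and c: "c > 0"
    and nvp: "noise_var k \<alpha> \<mu> K > 0" and L: "L > 0" and \<epsilon>: "\<epsilon> > 0"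
    and finF: "finite F" and Fp: "\<forall>f\<in>F. lipschitz_Rd d L f \<and> (\<forall>x\<in>space (RdM d). \<bar>f x\<bar> \<le> 1)"
    and dcon: "real d \<ge> 4096 * c * L^2 * noise_var k \<alpha> \<mu> K / \<epsilon>^2"
  shows "measure (P n)
        {\<omega> \<in> space (P n).
          \<exists>f\<in>F. (1 / real n) * (\<Sum>i<n.
              (f (fst (snd (\<omega> i))) - integral\<^sup>L (\<mu> (fst (\<omega> i))) f)
              * (snd (snd (\<omega> i)) - cond_mean K (fst (snd (\<omega> i))))) \<ge> \<epsilon> / 8}
      \<le> exp (- real n * (noise_var k \<alpha> \<mu> K)^2 / 8)
        + exp (ln (real (card F)) - \<epsilon>^2 * real n * real d / (4096 * c * L^2 * noise_var k \<alpha> \<mu> K))"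
proof -
  define nv where "nv = noise_var k \<alpha> \<mu> K"
  have nv: "nv > 0" using nvp by (simp add: nv_def)
  interpret prob_space "P n" by (rule P_prob)
  define E where "E = {\<omega> \<in> space (P n).
          \<exists>f\<in>F. (1 / real n) * (\<Sum>i<n.
              (f (fst (snd (\<omega> i))) - integral\<^sup>L (\<mu> (fst (\<omega> i))) f)
              * (snd (snd (\<omega> i)) - cond_mean K (fst (snd (\<omega> i))))) \<ge> \<epsilon> / 8}"
  define R where "R = \<epsilon>^2 * real n * real d / (4096 * c * L^2 * nv)"
  have pos: "0 \<le> exp (- real n * nv^2 / 8) + exp (ln (real (card F)) - R)"
    by (intro add_nonneg_nonneg) auto
  show ?thesis
  proof (cases "n = 0")
    case True
    then have "E = {}" using \<epsilon> by (auto simp: E_def)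
    then have "measure (P n) E \<le> exp (- real n * nv^2 / 8) + exp (ln (real (card F)) - R)"
      using pos by simp
    then show ?thesis unfolding E_def nv_def R_def .
  next
    case False
    then have n: "n > 0" by simp
    have "0 < 4096 * c * L^2 * nv / \<epsilon>^2" using c L nv \<epsilon> by simp
    then have dpos: "d > 0" using dcon by (simp add: nv_def)
    define D where "D = real d / (c * L^2)"
    define \<theta> where "\<theta> = \<epsilon>^2 / (128 * nv)"
    have Dpos: "D > 0" using dpos c L by (simp add: D_def)
    have \<theta>pos: "\<theta> > 0" using \<epsilon> nv by (simp add: \<theta>_def)
    have D\<theta>: "D * \<theta> \<ge> 32"
    proof -
      have "4096 * c * L^2 * nv \<le> real d * \<epsilon>^2"
        using dcon \<epsilon> by (simp add: nv_def field_simps)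
      then show ?thesis using c L nv by (simp add: D_def \<theta>_def field_simps)
    qed
    have R_eq: "R = real n * (D * \<theta>) / 32"
      using c L nv by (simp add: R_def D_def \<theta>_def field_simps power2_eq_square)
    define af where "af f \<omega> = f (fst (snd \<omega>)) - integral\<^sup>L (\<mu> (fst \<omega>)) f"
      for f :: "(nat \<Rightarrow> real) \<Rightarrow> real" and \<omega> :: "nat \<times> (nat \<Rightarrow> real) \<times> real"
    define Bs where "Bs = {\<omega>\<in>space (P n). real n * nv + real n * nv \<le> (\<Sum>i<n. zsq (\<omega> i))}"
    define G where "G f = {\<omega>\<in>space (P n). real n * \<theta> \<le> (\<Sum>i<n. (af f (\<omega> i))^2)}"
      for f :: "(nat \<Rightarrow> real) \<Rightarrow> real"
    have zc[measurable]: "(\<lambda>\<omega>. zsq (\<omega> i)) \<in> borel_measurable (P n)" if "i < n" for i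
      using measurable_comp[OF P_comp_meas[OF that] zsq_measJ] by (simp add: comp_def)
    have Bs_sets: "Bs \<in> sets (P n)" unfolding Bs_def by measurable
    have G_sets: "G f \<in> sets (P n)" if f: "f \<in> F" for f
    proof -
      have fm[measurable]: "f \<in> borel_measurable (RdM d)" using Fp f lipschitz_measurable by blast
      have mm[measurable]: "(\<lambda>l. integral\<^sup>L (\<mu> l) f) \<in> borel_measurable (count_space {..<k})" by simp
      have hm: "(\<lambda>\<omega>. (af f \<omega>)^2) \<in> borel_measurable \<Omega>"
        unfolding \<Omega>_def af_def by measurable
      then have hJ[measurable]: "(\<lambda>\<omega>. (af f \<omega>)^2) \<in> borel_measurable J"
        by (subst measurable_cong_sets[OF J_sets refl])
      have [measurable]: "(\<lambda>\<omega>. (af f (\<omega> i))^2) \<in> borel_measurable (P n)" if "i < n" for i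
        using measurable_comp[OF P_comp_meas[OF that] hJ] by (simp add: comp_def)
      show ?thesis unfolding G_def by measurable
    qed
    have sub: "E \<subseteq> Bs \<union> (\<Union>f\<in>F. G f)"
    proof
      fix \<omega> assume "\<omega> \<in> E"
      then obtain f where f: "f \<in> F" and sp: "\<omega> \<in> space (P n)"
        and ev: "(1 / real n) * (\<Sum>i<n. af f (\<omega> i) * (snd (snd (\<omega> i)) - cond_mean K (fst (snd (\<omega> i))))) \<ge> \<epsilon> / 8"
        unfolding E_def af_def by blast
      define S where "S = (\<Sum>i<n. af f (\<omega> i) * (snd (snd (\<omega> i)) - cond_mean K (fst (snd (\<omega> i)))))"
      define SA where "SA = (\<Sum>i<n. (af f (\<omega> i))^2)"
      define SZ where "SZ = (\<Sum>i<n. zsq (\<omega> i))"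
      have SA0: "0 \<le> SA" unfolding SA_def by (intro sum_nonneg) auto
      have Sge: "real n * \<epsilon> / 8 \<le> S" using ev n by (simp add: S_def field_simps)
      have CS: "S^2 \<le> SA * SZ"
        unfolding S_def SA_def SZ_def zsq_def by (rule Cauchy_Schwarz_ineq_sum)
      show "\<omega> \<in> Bs \<union> (\<Union>f\<in>F. G f)"
      proof (cases "\<omega> \<in> Bs")
        case False
        then have SZlt: "SZ < 2 * real n * nv" using sp by (simp add: Bs_def SZ_def algebra_simps)
        have "real n * \<theta> \<le> SA"
        proof (rule ccontr)
          assume "\<not> real n * \<theta> \<le> SA"
          then have SAlt: "SA < real n * \<theta>" by simp
          have "(real n * \<epsilon> / 8)^2 \<le> S^2"
            using Sge n \<epsilon> by (intro power_mono) auto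
          also have "\<dots> \<le> SA * SZ" by (rule CS)
          also have "\<dots> \<le> SA * (2 * real n * nv)" using SA0 SZlt by (intro mult_left_mono) auto
          also have "\<dots> < real n * \<theta> * (2 * real n * nv)"
            using SAlt n nv by (intro mult_strict_right_mono) auto
          also have "\<dots> = (real n * \<epsilon> / 8)^2"
            using nv by (simp add: \<theta>_def power2_eq_square field_simps)
          finally show False by simp
        qed
        then have "\<omega> \<in> G f" using sp by (simp add: G_def SA_def)
        then show ?thesis using f by blast
      qed simp
    qed
    have "measure (P n) E \<le> measure (P n) (Bs \<union> (\<Union>f\<in>F. G f))"
      by (rule finite_measure_mono[OF sub]) (use Bs_sets G_sets finF in auto)
    also have "\<dots> \<le> measure (P n) Bs + measure (P n) (\<Union>f\<in>F. G f)"
      by (rule measure_Un_le) (use Bs_sets G_sets finF in auto)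
    also have "\<dots> \<le> exp (- real n * nv^2 / 8) + (\<Sum>f\<in>F. measure (P n) (G f))"
    proof (rule add_mono)
      show "measure (P n) Bs \<le> exp (- real n * nv^2 / 8)"
        using hoeffding_part[OF n] by (simp add: Bs_def nv_def)
      show "measure (P n) (\<Union>f\<in>F. G f) \<le> (\<Sum>f\<in>F. measure (P n) (G f))"
        by (rule measure_UNION_le[OF finF G_sets])
    qed
    also have "(\<Sum>f\<in>F. measure (P n) (G f)) \<le> (\<Sum>f\<in>F. exp (- R))"
    proof (rule sum_mono)
      fix f assume f: "f \<in> F"
      have lip: "lipschitz_Rd d L f" and fb: "\<forall>x\<in>space (RdM d). \<bar>f x\<bar> \<le> 1" using Fp f by auto
      have "measure (P n) (G f) \<le> exp (- (D / 4) * (real n * \<theta>)) * 6 ^ n"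
        using G_bound[OF iso c L dpos lip fb, where t="real n * \<theta>"] by (simp add: G_def af_def D_def)
      also have "6 ^ n = exp (real n * ln 6)"
        by (simp add: exp_of_nat_mult)
      also have "exp (- (D / 4) * (real n * \<theta>)) * exp (real n * ln 6) = exp (real n * (ln 6 - D * \<theta> / 4))"
        by (simp add: mult_exp_exp algebra_simps)
      also have "\<dots> \<le> exp (- R)"
      proof -
        have "ln (6::real) \<le> 6" using ln_le_minus_one[of 6] by simp
        then have "ln 6 - D * \<theta> / 4 \<le> - (D * \<theta>) / 32" using D\<theta> by simp
        then have "real n * (ln 6 - D * \<theta> / 4) \<le> real n * (- (D * \<theta>) / 32)"
          by (intro mult_left_mono) auto
        then show ?thesis by (simp add: R_eq)
      qed
      finally show "measure (P n) (G f) \<le> exp (- R)" .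
    qed
    also have "(\<Sum>f\<in>F. exp (- R)) \<le> exp (ln (real (card F)) - R)"
    proof (cases "card F = 0")
      case True then show ?thesis by simp
    next
      case False
      then have "(\<Sum>f\<in>F. exp (- R)) = real (card F) * exp (- R)" by simp
      also have "\<dots> = exp (ln (real (card F)) - R)"
        using False by (simp add: exp_diff exp_minus field_simps)
      finally show ?thesis by simp
    qed
    finally show ?thesis unfolding E_def nv_def R_def by (simp only: add_le_cancel_left)
  qed
qed

end

theorem mainTheorem4:
  shows "\<exists>C1::real. C1 > 0 \<and>
    (\<forall>(d::nat) (k::nat) (\<alpha>::nat \<Rightarrow> real) (\<mu>::nat \<Rightarrow> (nat \<Rightarrow> real) measure) (c::real)
      (K::(nat \<Rightarrow> real) \<Rightarrow> real measure) (n::nat) (L::real) (\<epsilon>::real)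
      (F::((nat \<Rightarrow> real) \<Rightarrow> real) set).
      c > 0 \<and> (\<forall>l<k. \<alpha> l \<ge> 0) \<and> (\<Sum>l<k. \<alpha> l) = 1 \<and>
      (\<forall>l<k. isoperimetric d c (\<mu> l)) \<and>
      K \<in> RdM d \<rightarrow>\<^sub>M prob_algebra borel \<and>
      (\<forall>x\<in>space (RdM d). AE y in K x. \<bar>y\<bar> \<le> 1) \<and>
      noise_var k \<alpha> \<mu> K > 0 \<and> L > 0 \<and> \<epsilon> > 0 \<and>
      finite F \<and> (\<forall>f\<in>F. lipschitz_Rd d L f \<and> (\<forall>x\<in>space (RdM d). \<bar>f x\<bar> \<le> 1)) \<and>
      real d \<ge> C1 * c * L^2 * noise_var k \<alpha> \<mu> K / \<epsilon>^2
      \<longrightarrow>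
      measure (sample_law d k \<alpha> \<mu> K n)
        {\<omega> \<in> space (sample_law d k \<alpha> \<mu> K n).
          \<exists>f\<in>F. (1 / real n) * (\<Sum>i<n.
              (f (fst (snd (\<omega> i))) - integral\<^sup>L (\<mu> (fst (\<omega> i))) f)
              * (snd (snd (\<omega> i)) - cond_mean K (fst (snd (\<omega> i))))) \<ge> \<epsilon> / 8}
      \<le> exp (- real n * (noise_var k \<alpha> \<mu> K)^2 / 8)
        + exp (ln (real (card F)) - \<epsilon>^2 * real n * real d / (C1 * c * L^2 * noise_var k \<alpha> \<mu> K)))"
  apply (rule exI[of _ 4096])
  apply (intro conjI allI impI)
   apply simp
  subgoal premises H for d k \<alpha> \<mu> c K n L \<epsilon> F
  proof -
    have m: "model d k \<alpha> \<mu> K"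
      unfolding model_def using H by (auto simp: isoperimetric_def)
    show ?thesis
      by (rule model.main_bound[OF m]) (use H in auto)
  qed
  done

end
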